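(* Let $T$ be an order tree of height at most $\omega_1$, $G$ a sparse $T$-graph, $H=G\sharp\mathbb{N}$ its ray inflation, and $0\le i<\omega_1$. Then the map $t\mapsto H[\lfloor t\rfloor\times\mathbb{N}]$, where $\lfloor t\rfloor=\{t'\in T : t\le t'\}$, is a bijection between the level $T^i$ and the set of components of $H-(T^{<i}\times\mathbb{N})$.
   Context: An order tree is a partial order $(T,\le)$ with a unique minimal element (the root) in which every set $\{t' : t'\le t\}$ is well-ordered; the height of $t$ is the order type of $\{t' : t'<t\}$; $T^i$ is the set of points of height $i$ and $T^{<i}=\bigcup_{j<i}T^j$; the height of $T$ is the supremum of the order types of its maximal chains. $t$ is a successor of $t'$ (its predecessor) if $t'<t$ with nothing strictly between; otherwise $t$ is a limit. A $T$-graph is a graph $G$ with $V(G)=T$ whose edges join comparable points and in which for every $t$ the neighbours of $t$ below $t$ (its down-neighbours) are cofinal in $\{s : s<t\}$. $G$ is sparse if the set of down-neighbours of each $t$ has order type $\mathrm{cf}(\{s : s<t\})$; for height at most $\omega_1$, this means a successor's only down-neighbour is its predecessor and a non-root limit's down-neighbours form a cofinal $\omega$-sequence below it. The ray inflation $G\sharp\mathbb{N}$ has vertex set $T\times\mathbb{N}$ and edges: $(t,n)(t,n+1)$ for all $t,n$; $(t,n)(t',n)$ for all $n$ if $t$ is a successor with predecessor $t'$; $(t,n)(t_n,n)$ for all $n$ if $t$ is a non-root limit with down-neighbours $t_0<t_1<\cdots$. $H[X]$ denotes the induced subgraph on $X$. *)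

theory Defs
  imports Main
begin

definition down :: "'a rel \<Rightarrow> 'a \<Rightarrow> 'a set" where
  "down le t = {s. (s, t) \<in> le}"

definition sdown :: "'a rel \<Rightarrow> 'a \<Rightarrow> 'a set" where
  "sdown le t = {s. (s, t) \<in> le \<and> s \<noteq> t}"

definition up :: "'a rel \<Rightarrow> 'a \<Rightarrow> 'a set" where
  "up le t = {s. (t, s) \<in> le}"

definition order_tree :: "'a set \<Rightarrow> 'a rel \<Rightarrow> bool" where
  "order_tree T le \<longleftrightarrow>
     le \<subseteq> T \<times> T \<and> refl_on T le \<and> antisym le \<and> trans le \<and>
     (\<exists>!r. r \<in> T \<and> (\<forall>t\<in>T. (t, r) \<in> le \<longrightarrow> t = r)) \<and>
     (\<forall>t\<in>T. Well_order (Restr le (down le t)))"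

definition is_chain :: "'a set \<Rightarrow> 'a rel \<Rightarrow> 'a set \<Rightarrow> bool" where
  "is_chain T le C \<longleftrightarrow> C \<subseteq> T \<and> (\<forall>x\<in>C. \<forall>y\<in>C. (x, y) \<in> le \<or> (y, x) \<in> le)"

definition maximal_chain :: "'a set \<Rightarrow> 'a rel \<Rightarrow> 'a set \<Rightarrow> bool" where
  "maximal_chain T le C \<longleftrightarrow> is_chain T le C \<and> (\<forall>D. is_chain T le D \<and> C \<subseteq> D \<longrightarrow> D = C)"

text \<open>Height of T at most omega_1: every maximal chain has order type at most omega_1
  (the supremum of these order types is at most omega_1 iff each one is).
  omega_1 is represented by the well-order cardSuc natLeq.\<close>

definition height_le_omega1 :: "'a set \<Rightarrow> 'a rel \<Rightarrow> bool" where
  "height_le_omega1 T le \<longleftrightarrow>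
     (\<forall>C. maximal_chain T le C \<longrightarrow> (Restr le C, cardSuc natLeq) \<in> ordLeq)"

text \<open>Levels: the ordinal i is given by a well-order relation; the height of t is the
  order type of its strict down-set.\<close>

definition level :: "'a set \<Rightarrow> 'a rel \<Rightarrow> 'b rel \<Rightarrow> 'a set" where
  "level T le i = {t \<in> T. (Restr le (sdown le t), i) \<in> ordIso}"

definition below_level :: "'a set \<Rightarrow> 'a rel \<Rightarrow> 'b rel \<Rightarrow> 'a set" where
  "below_level T le i = {t \<in> T. (Restr le (sdown le t), i) \<in> ordLess}"

definition is_root :: "'a set \<Rightarrow> 'a rel \<Rightarrow> 'a \<Rightarrow> bool" where
  "is_root T le t \<longleftrightarrow> t \<in> T \<and> (\<forall>s\<in>T. (s, t) \<in> le \<longrightarrow> s = t)"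

definition is_pred :: "'a set \<Rightarrow> 'a rel \<Rightarrow> 'a \<Rightarrow> 'a \<Rightarrow> bool" where
  "is_pred T le t' t \<longleftrightarrow> t' \<in> T \<and> t \<in> T \<and> t' \<in> sdown le t \<and>
     \<not> (\<exists>s\<in>T. s \<in> sdown le t \<and> t' \<in> sdown le s)"

definition is_successor :: "'a set \<Rightarrow> 'a rel \<Rightarrow> 'a \<Rightarrow> bool" where
  "is_successor T le t \<longleftrightarrow> (\<exists>t'. is_pred T le t' t)"

definition pred_of :: "'a set \<Rightarrow> 'a rel \<Rightarrow> 'a \<Rightarrow> 'a" where
  "pred_of T le t = (THE t'. is_pred T le t' t)"

definition is_graph :: "'v set \<Rightarrow> 'v rel \<Rightarrow> bool" where
  "is_graph V E \<longleftrightarrow> E \<subseteq> V \<times> V \<and> sym E \<and> irrefl E"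

definition down_nbrs :: "'a rel \<Rightarrow> 'a rel \<Rightarrow> 'a \<Rightarrow> 'a set" where
  "down_nbrs le E t = {s. (s, t) \<in> E \<and> s \<in> sdown le t}"

definition T_graph :: "'a set \<Rightarrow> 'a rel \<Rightarrow> 'a rel \<Rightarrow> bool" where
  "T_graph T le E \<longleftrightarrow> is_graph T E \<and>
     (\<forall>(x, y)\<in>E. (x, y) \<in> le \<or> (y, x) \<in> le) \<and>
     (\<forall>t\<in>T. \<forall>s\<in>sdown le t. \<exists>u\<in>down_nbrs le E t. (s, u) \<in> le)"

text \<open>Sparse T-graph, in the form stated for trees of height at most omega_1:
  a successor's only down-neighbour is its predecessor, and the down-neighbours of a
  non-root limit form a (cofinal) omega-sequence, i.e. have order type omega (natLeq).\<close>

definition sparse :: "'a set \<Rightarrow> 'a rel \<Rightarrow> 'a rel \<Rightarrow> bool" where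
  "sparse T le E \<longleftrightarrow> T_graph T le E \<and>
     (\<forall>t\<in>T. is_successor T le t \<longrightarrow> down_nbrs le E t = {pred_of T le t}) \<and>
     (\<forall>t\<in>T. \<not> is_successor T le t \<and> \<not> is_root T le t \<longrightarrow>
        (Restr le (down_nbrs le E t), natLeq) \<in> ordIso)"

text \<open>The n-th down-neighbour t_n (counting from 0) of a limit t: the one with exactly n
  down-neighbours strictly below it.\<close>

definition nth_dn :: "'a rel \<Rightarrow> 'a rel \<Rightarrow> 'a \<Rightarrow> nat \<Rightarrow> 'a" where
  "nth_dn le E t n = (THE s. s \<in> down_nbrs le E t \<and>
      card {s' \<in> down_nbrs le E t. s' \<in> sdown le s} = n)"

definition ray_edges0 :: "'a set \<Rightarrow> 'a rel \<Rightarrow> 'a rel \<Rightarrow> ('a \<times> nat) rel" where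
  "ray_edges0 T le E =
     {((t, n), (t, Suc n)) | t n. t \<in> T} \<union>
     {((t, n), (pred_of T le t, n)) | t n. t \<in> T \<and> is_successor T le t} \<union>
     {((t, n), (nth_dn le E t n, n)) | t n. t \<in> T \<and> \<not> is_successor T le t \<and> \<not> is_root T le t}"

definition ray_inflation :: "'a set \<Rightarrow> 'a rel \<Rightarrow> 'a rel \<Rightarrow> ('a \<times> nat) set \<times> ('a \<times> nat) rel" where
  "ray_inflation T le E = (T \<times> UNIV, ray_edges0 T le E \<union> (ray_edges0 T le E)\<inverse>)"

definition induced :: "'v set \<times> 'v rel \<Rightarrow> 'v set \<Rightarrow> 'v set \<times> 'v rel" where
  "induced G X = (fst G \<inter> X, snd G \<inter> ((fst G \<inter> X) \<times> (fst G \<inter> X)))"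

definition delete :: "'v set \<times> 'v rel \<Rightarrow> 'v set \<Rightarrow> 'v set \<times> 'v rel" where
  "delete G X = induced G (fst G - X)"

definition components :: "'v set \<times> 'v rel \<Rightarrow> ('v set \<times> 'v rel) set" where
  "components G = {induced G C | C. \<exists>v\<in>fst G.
      C = {w \<in> fst G. (v, w) \<in> (snd G \<inter> (fst G \<times> fst G))\<^sup>*}}"

end

theory Submission
  imports Defs
begin


lemma ot_le: "order_tree T le \<Longrightarrow> (a,b)\<in>le \<Longrightarrow> a\<in>T \<and> b\<in>T"
  unfolding order_tree_def by blast

lemma ot_refl: "order_tree T le \<Longrightarrow> a\<in>T \<Longrightarrow> (a,a)\<in>le"
  unfolding order_tree_def refl_on_def by blast

lemma ot_trans: "order_tree T le \<Longrightarrow> (a,b)\<in>le \<Longrightarrow> (b,c)\<in>le \<Longrightarrow> (a,c)\<in>le"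
  unfolding order_tree_def trans_def by blast

lemma ot_antisym: "order_tree T le \<Longrightarrow> (a,b)\<in>le \<Longrightarrow> (b,a)\<in>le \<Longrightarrow> a = b"
  unfolding order_tree_def antisym_def by blast

lemma ot_Field: "order_tree T le \<Longrightarrow> A \<subseteq> T \<Longrightarrow> Field (Restr le A) = A"
  unfolding Field_def using ot_refl[of T le] by blast

lemma ot_comp:
  assumes ot: "order_tree T le" and "s\<in>T" "(a,s)\<in>le" "(b,s)\<in>le"
  shows "(a,b)\<in>le \<or> (b,a)\<in>le"
proof -
  have W: "Well_order (Restr le (down le s))" using ot assms(2) unfolding order_tree_def by blast
  have F: "Field (Restr le (down le s)) = down le s"
    apply (rule ot_Field[OF ot]) unfolding down_def using ot_le[OF ot] by blast
  have "a \<in> down le s" "b \<in> down le s" using assms unfolding down_def by auto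
  moreover have "total_on (down le s) (Restr le (down le s))"
    using W F unfolding well_order_on_def linear_order_on_def by simp
  ultimately show ?thesis unfolding total_on_def
    using ot_refl[OF ot] ot_le[OF ot assms(3)] by (cases "a = b") auto
qed

lemma ot_WO_sdown:
  assumes ot: "order_tree T le" and "s\<in>T"
  shows "Well_order (Restr le (sdown le s))"
proof -
  have W: "Well_order (Restr le (down le s))" using ot assms(2) unfolding order_tree_def by blast
  have "Restr le (sdown le s) = Restr (Restr le (down le s)) (sdown le s)"
    unfolding sdown_def down_def by auto
  then show ?thesis using Well_order_Restr[OF W] by simp
qed

lemma ot_wf:
  assumes ot: "order_tree T le"
  shows "wf {(a,b). b\<in>T \<and> a\<in>sdown le b}"
  unfolding wf_eq_minimal
proof (intro allI impI)
  fix Q x assume xQ: "x \<in> (Q::'a set)"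
  show "\<exists>z\<in>Q. \<forall>y. (y, z) \<in> {(a, b). b \<in> T \<and> a \<in> sdown le b} \<longrightarrow> y \<notin> Q"
  proof (cases "x\<in>T")
    case False then show ?thesis using xQ by blast
  next
    case True
    have W: "Well_order (Restr le (down le x))" using ot True unfolding order_tree_def by blast
    then have wf: "wf (Restr le (down le x) - Id)" unfolding well_order_on_def by blast
    have "x \<in> Q \<inter> down le x" using xQ ot_refl[OF ot True] unfolding down_def by blast
    then obtain z where z: "z \<in> Q \<inter> down le x" and zm: "\<forall>y. (y,z) \<in> Restr le (down le x) - Id \<longrightarrow> y \<notin> Q \<inter> down le x"
      using wf unfolding wf_eq_minimal by metis
    show ?thesis
    proof (rule bexI[of _ z])
      show "z\<in>Q" using z by blast
      show "\<forall>y. (y, z) \<in> {(a, b). b \<in> T \<and> a \<in> sdown le b} \<longrightarrow> y \<notin> Q"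
      proof (intro allI impI)
        fix y assume "(y, z) \<in> {(a, b). b \<in> T \<and> a \<in> sdown le b}"
        then have "(y,z)\<in>le" "y\<noteq>z" unfolding sdown_def by auto
        moreover have "(z,x)\<in>le" using z unfolding down_def by auto
        ultimately have "(y,z) \<in> Restr le (down le x) - Id" "y \<in> down le x"
          unfolding down_def using ot_trans[OF ot] by blast+
        then show "y\<notin>Q" using zm by blast
      qed
    qed
  qed
qed

lemma ot_sdown_sub:
  assumes ot: "order_tree T le" and "t \<in> sdown le s"
  shows "underS (Restr le (sdown le s)) t = sdown le t"
  using assms unfolding underS_def sdown_def
  by (auto dest: ot_trans[OF ot] ot_antisym[OF ot])

lemma ot_lt_type:
  assumes ot: "order_tree T le" and s: "s\<in>T" and t: "t \<in> sdown le s"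
  shows "(Restr le (sdown le t), Restr le (sdown le s)) \<in> ordLess"
proof -
  have tT: "t\<in>T" using t ot_le[OF ot] unfolding sdown_def by blast
  have W: "Well_order (Restr le (sdown le s))" by (rule ot_WO_sdown[OF ot s])
  have W': "Well_order (Restr le (sdown le t))" by (rule ot_WO_sdown[OF ot tT])
  have F: "Field (Restr le (sdown le s)) = sdown le s"
    apply (rule ot_Field[OF ot]) unfolding sdown_def using ot_le[OF ot] by blast
  have "Restr (Restr le (sdown le s)) (sdown le t) = Restr le (sdown le t)"
    using t unfolding sdown_def by (auto dest: ot_trans[OF ot] ot_antisym[OF ot])
  then have "(Restr le (sdown le t), Restr (Restr le (sdown le s)) (underS (Restr le (sdown le s)) t)) \<in> ordIso"
    using ot_sdown_sub[OF ot t] ordIso_reflexive[OF W'] by simp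
  then show ?thesis using ordLess_iff_ordIso_Restr[OF W W'] F t by blast
qed



lemma ot_level_below:
  assumes ot: "order_tree T le" and s: "s\<in>T" and wi: "Well_order i"
    and nl: "(Restr le (sdown le s), i) \<notin> ordLess"
  shows "\<exists>t. t \<in> level T le i \<and> (t,s)\<in>le"
proof -
  have W: "Well_order (Restr le (sdown le s))" by (rule ot_WO_sdown[OF ot s])
  have "(i, Restr le (sdown le s)) \<in> ordLeq" using ordLess_or_ordLeq[OF W wi] nl by blast
  then have "(i, Restr le (sdown le s)) \<in> ordLess \<or> (i, Restr le (sdown le s)) \<in> ordIso"
    using ordLeq_iff_ordLess_or_ordIso by blast
  then show ?thesis
  proof
    assume "(i, Restr le (sdown le s)) \<in> ordIso"
    then have "s \<in> level T le i" unfolding level_def using s ordIso_symmetric by blast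
    then show ?thesis using ot_refl[OF ot s] by blast
  next
    assume "(i, Restr le (sdown le s)) \<in> ordLess"
    moreover have F: "Field (Restr le (sdown le s)) = sdown le s"
      apply (rule ot_Field[OF ot]) unfolding sdown_def using ot_le[OF ot] by blast
    ultimately obtain a where a: "a \<in> sdown le s"
      and iso: "(i, Restr (Restr le (sdown le s)) (underS (Restr le (sdown le s)) a)) \<in> ordIso"
      using ordLess_iff_ordIso_Restr[OF W wi] by blast
    have "Restr (Restr le (sdown le s)) (sdown le a) = Restr le (sdown le a)"
      using a unfolding sdown_def by (auto dest: ot_trans[OF ot] ot_antisym[OF ot])
    then have "(i, Restr le (sdown le a)) \<in> ordIso" using iso ot_sdown_sub[OF ot a] by simp
    moreover have "a \<in> T" "(a,s)\<in>le" using a ot_le[OF ot] unfolding sdown_def by auto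
    ultimately show ?thesis unfolding level_def using ordIso_symmetric by blast
  qed
qed

lemma ot_level_up:
  assumes ot: "order_tree T le" and t: "t \<in> level T le i" and ts: "(t,s)\<in>le"
  shows "(Restr le (sdown le s), i) \<notin> ordLess"
proof (cases "t = s")
  case True then show ?thesis using t not_ordLess_ordIso unfolding level_def by blast
next
  case False
  have s: "s\<in>T" using ot_le[OF ot ts] by blast
  have "(Restr le (sdown le t), Restr le (sdown le s)) \<in> ordLess"
    using ot_lt_type[OF ot s] False ts unfolding sdown_def by blast
  moreover have "(i, Restr le (sdown le t)) \<in> ordIso" using t ordIso_symmetric unfolding level_def by blast
  ultimately have "(i, Restr le (sdown le s)) \<in> ordLess" using ordIso_ordLess_trans by blast
  then show ?thesis using not_ordLess_ordLeq ordLess_imp_ordLeq by blast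
qed

lemma ot_level_eq:
  assumes ot: "order_tree T le" and t: "t \<in> level T le i" and t': "t' \<in> level T le i"
    and tt: "(t,t')\<in>le"
  shows "t = t'"
proof (rule ccontr)
  assume ne: "t \<noteq> t'"
  have s: "t'\<in>T" using ot_le[OF ot tt] by blast
  have "(Restr le (sdown le t), Restr le (sdown le t')) \<in> ordLess"
    using ot_lt_type[OF ot s] ne tt unfolding sdown_def by blast
  moreover have "(i, Restr le (sdown le t)) \<in> ordIso" using t ordIso_symmetric unfolding level_def by blast
  ultimately have "(i, Restr le (sdown le t')) \<in> ordLess" using ordIso_ordLess_trans by blast
  moreover have "(Restr le (sdown le t'), i) \<in> ordIso" using t' unfolding level_def by blast
  ultimately have "(i,i) \<in> ordLess" using ordLess_ordIso_trans by blast
  then show False using ordLess_irreflexive by blast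
qed



lemma ot_pred_unique:
  assumes ot: "order_tree T le" and p: "is_pred T le p t"
  shows "pred_of T le t = p"
  unfolding pred_of_def
proof (rule the_equality)
  show "is_pred T le p t" by (rule p)
  fix p' assume p': "is_pred T le p' t"
  have "(p,t)\<in>le" "(p',t)\<in>le" "t\<in>T" "p\<in>T" "p'\<in>T" using p p' unfolding is_pred_def sdown_def by auto
  then have c: "(p,p')\<in>le \<or> (p',p)\<in>le" using ot_comp[OF ot] by blast
  show "p' = p"
  proof (rule ccontr)
    assume ne: "p' \<noteq> p"
    from c show False
    proof
      assume "(p,p')\<in>le" then show False using p p' ne unfolding is_pred_def sdown_def by blast
    next
      assume "(p',p)\<in>le" then show False using p p' ne unfolding is_pred_def sdown_def by blast
    qed
  qed
qed

lemma ot_pred_of: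
  assumes ot: "order_tree T le" and s: "is_successor T le t"
  shows "is_pred T le (pred_of T le t) t"
proof -
  obtain p where "is_pred T le p t" using s unfolding is_successor_def by blast
  then show ?thesis using ot_pred_unique[OF ot] by simp
qed

lemma nth_dn_props:
  assumes ot: "order_tree T le" and tT: "t \<in> T"
    and iso: "(Restr le (down_nbrs le E t), natLeq) \<in> ordIso"
  shows "nth_dn le E t n \<in> down_nbrs le E t"
    and "u \<in> down_nbrs le E t \<Longrightarrow> \<exists>n. nth_dn le E t n = u"
proof -
  define dn where "dn = down_nbrs le E t"
  have dnT: "dn \<subseteq> T" unfolding dn_def down_nbrs_def sdown_def using ot_le[OF ot] by blast
  obtain f where f: "iso (Restr le dn) natLeq f" using iso unfolding ordIso_def dn_def by blast
  have F: "Field (Restr le dn) = dn" by (rule ot_Field[OF ot dnT])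
  have bij: "bij_betw f dn UNIV" and cmp: "\<And>a b. a\<in>dn \<Longrightarrow> b\<in>dn \<Longrightarrow> (a,b)\<in>le \<longleftrightarrow> f a \<le> f b"
    using f unfolding iso_iff2 F Field_natLeq by (auto simp: natLeq_def)
  have inj: "inj_on f dn" using bij bij_betw_def by blast
  have cnt: "card {s'\<in>dn. s' \<in> sdown le u} = f u" if u: "u\<in>dn" for u
  proof -
    have "f ` {s'\<in>dn. s' \<in> sdown le u} = {..<f u}"
    proof
      show "f ` {s'\<in>dn. s' \<in> sdown le u} \<subseteq> {..<f u}"
      proof
        fix k assume "k \<in> f ` {s'\<in>dn. s' \<in> sdown le u}"
        then obtain s' where s': "s'\<in>dn" "(s',u)\<in>le" "s'\<noteq>u" "k = f s'" unfolding sdown_def by auto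
        have "f s' \<le> f u" using cmp[OF s'(1) u] s'(2) by simp
        moreover have "f s' \<noteq> f u" using inj s'(1) u s'(3) unfolding inj_on_def by blast
        ultimately show "k \<in> {..<f u}" using s' by simp
      qed
    next
      show "{..<f u} \<subseteq> f ` {s'\<in>dn. s' \<in> sdown le u}"
      proof
        fix k assume k: "k \<in> {..<f u}"
        obtain s' where s': "s'\<in>dn" "k = f s'" using bij unfolding bij_betw_def by blast
        then have "(s',u)\<in>le" "s' \<noteq> u" using cmp u k by auto
        then show "k \<in> f ` {s'\<in>dn. s' \<in> sdown le u}" using s' unfolding sdown_def by blast
      qed
    qed
    moreover have "inj_on f {s'\<in>dn. s' \<in> sdown le u}" using inj by (rule inj_on_subset) blast
    then have "card (f ` {s'\<in>dn. s' \<in> sdown le u}) = card {s'\<in>dn. s' \<in> sdown le u}" by (rule card_image)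
    ultimately show ?thesis by simp
  qed
  have eq: "nth_dn le E t n = inv_into dn f n" for n
    unfolding nth_dn_def dn_def[symmetric]
  proof (rule the_equality)
    have "n \<in> f ` dn" using bij unfolding bij_betw_def by simp
    then have "inv_into dn f n \<in> dn" "f (inv_into dn f n) = n" by (rule inv_into_into, rule f_inv_into_f)
    then show "inv_into dn f n \<in> dn \<and> card {s' \<in> dn. s' \<in> sdown le (inv_into dn f n)} = n"
      using cnt by simp
    fix s assume "s \<in> dn \<and> card {s' \<in> dn. s' \<in> sdown le s} = n"
    then have "s\<in>dn" "f s = n" using cnt by auto
    then show "s = inv_into dn f n" using inv_into_f_f[OF inj] by metis
  qed
  show "nth_dn le E t n \<in> down_nbrs le E t"
    unfolding eq dn_def[symmetric] using bij unfolding bij_betw_def by (simp add: inv_into_into)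
  show "\<exists>n. nth_dn le E t n = u" if "u \<in> down_nbrs le E t"
    using inv_into_f_f[OF inj that[folded dn_def]] unfolding eq by blast
qed



lemma edge0_cases:
  assumes ot: "order_tree T le" and sp: "sparse T le E" and e: "(x,y) \<in> ray_edges0 T le E"
  shows "fst x \<in> T \<and> ((fst y = fst x \<and> snd y = Suc (snd x)) \<or> (snd y = snd x \<and> (fst y, fst x) \<in> le))"
  using e unfolding ray_edges0_def
proof (elim UnE)
  assume "(x, y) \<in> {((t, n), t, Suc n) |t n. t \<in> T}" then show ?thesis by auto
next
  assume "(x, y) \<in> {((t, n), pred_of T le t, n) |t n. t \<in> T \<and> is_successor T le t}"
  then obtain t n where t: "x = (t,n)" "y = (pred_of T le t, n)" "t\<in>T" "is_successor T le t" by blast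
  have "is_pred T le (pred_of T le t) t" by (rule ot_pred_of[OF ot t(4)])
  then show ?thesis using t unfolding is_pred_def sdown_def by auto
next
  assume "(x, y) \<in> {((t, n), nth_dn le E t n, n) |t n. t \<in> T \<and> \<not> is_successor T le t \<and> \<not> is_root T le t}"
  then obtain t n where t: "x = (t,n)" "y = (nth_dn le E t n, n)" "t\<in>T" "\<not> is_successor T le t" "\<not> is_root T le t" by blast
  have "(Restr le (down_nbrs le E t), natLeq) \<in> ordIso" using sp t unfolding sparse_def by blast
  then have "nth_dn le E t n \<in> down_nbrs le E t" using nth_dn_props(1)[OF ot t(3)] by blast
  then show ?thesis using t unfolding down_nbrs_def sdown_def by auto
qed

context
  fixes T :: "'a set" and le :: "'a rel" and E :: "'a rel" and i :: "'b rel"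
  assumes ot: "order_tree T le" and sp: "sparse T le E" and wi: "Well_order i"
begin

definition "WW = T \<times> (UNIV::nat set) - below_level T le i \<times> UNIV"
definition "EH = ray_edges0 T le E \<union> (ray_edges0 T le E)\<inverse>"
definition "RR = EH \<inter> (WW \<times> WW)"

lemma WW_char: "(s,n) \<in> WW \<longleftrightarrow> s \<in> T \<and> (\<exists>t \<in> level T le i. (t,s) \<in> le)"
proof
  assume "(s,n)\<in>WW"
  then have "s\<in>T" "s \<notin> below_level T le i" unfolding WW_def by auto
  then show "s \<in> T \<and> (\<exists>t \<in> level T le i. (t,s) \<in> le)"
    using ot_level_below[OF ot _ wi] unfolding below_level_def by blast
next
  assume "s \<in> T \<and> (\<exists>t \<in> level T le i. (t,s) \<in> le)"
  then show "(s,n)\<in>WW" using ot_level_up[OF ot] unfolding WW_def below_level_def by blast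
qed

lemma up_WW: "t \<in> level T le i \<Longrightarrow> up le t \<times> UNIV \<subseteq> WW"
  using WW_char ot_le[OF ot] unfolding up_def by blast

lemma RR_sym: "(x,y)\<in>RR \<Longrightarrow> (y,x)\<in>RR"
  unfolding RR_def EH_def by blast

lemma RR_rtrancl_sym: "(x,y)\<in>RR\<^sup>* \<Longrightarrow> (y,x)\<in>RR\<^sup>*"
proof -
  have "RR\<inverse> = RR" unfolding RR_def EH_def by blast
  then show "(x,y)\<in>RR\<^sup>* \<Longrightarrow> (y,x)\<in>RR\<^sup>*" using rtrancl_converse[of RR] by (metis converse_iff)
qed

lemma RR_closed:
  assumes t: "t \<in> level T le i" and x: "x \<in> up le t \<times> UNIV" and xy: "(x,y) \<in> RR"
  shows "y \<in> up le t \<times> UNIV"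
proof -
  have yW: "y \<in> WW" and xy': "(x,y) \<in> ray_edges0 T le E \<or> (y,x) \<in> ray_edges0 T le E"
    using xy unfolding RR_def EH_def by auto
  have tx: "(t, fst x) \<in> le" using x unfolding up_def by auto
  from xy' show ?thesis
  proof
    assume "(x,y) \<in> ray_edges0 T le E"
    from edge0_cases[OF ot sp this] show ?thesis
    proof (elim conjE disjE)
      assume "fst y = fst x" then show ?thesis using x by (cases y) auto
    next
      assume yx: "(fst y, fst x) \<in> le" and xT: "fst x \<in> T"
      obtain t' where t': "t' \<in> level T le i" "(t', fst y) \<in> le"
        using yW WW_char by (cases y) auto
      have "(t', fst x) \<in> le" using ot_trans[OF ot t'(2) yx] .
      then have "(t,t')\<in>le \<or> (t',t)\<in>le" using ot_comp[OF ot xT tx] by blast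
      then have "t = t'" using ot_level_eq[OF ot t t'(1)] ot_level_eq[OF ot t'(1) t] by blast
      then show ?thesis using t' unfolding up_def by (cases y) auto
    qed
  next
    assume "(y,x) \<in> ray_edges0 T le E"
    from edge0_cases[OF ot sp this] show ?thesis
    proof (elim conjE disjE)
      assume "fst x = fst y" then show ?thesis using x by (cases y) auto
    next
      assume "(fst x, fst y) \<in> le"
      then show ?thesis using ot_trans[OF ot tx] unfolding up_def by (cases y) auto
    qed
  qed
qed

lemma RR_closed_rtrancl:
  assumes t: "t \<in> level T le i" and xy: "(x,y) \<in> RR\<^sup>*" and x: "x \<in> up le t \<times> UNIV"
  shows "y \<in> up le t \<times> UNIV"
  using xy x
proof (induction rule: rtrancl_induct)
  case base then show ?case .
next
  case (step y z) then show ?case using RR_closed[OF t] by blast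
qed

lemma row:
  assumes t: "t \<in> level T le i" and s: "s \<in> up le t"
  shows "((s,0),(s,n)) \<in> RR\<^sup>*"
proof (induction n)
  case 0 then show ?case by simp
next
  case (Suc n)
  have sT: "s\<in>T" using s ot_le[OF ot] unfolding up_def by blast
  have "((s,n),(s,Suc n)) \<in> RR"
    unfolding RR_def EH_def ray_edges0_def using up_WW[OF t] s sT by blast
  then show ?case using Suc by (rule rtrancl_into_rtrancl[rotated])
qed

lemma row': "t \<in> level T le i \<Longrightarrow> s \<in> up le t \<Longrightarrow> ((s,n),(s,m)) \<in> RR\<^sup>*"
  using row RR_rtrancl_sym by (meson rtrancl_trans)

lemma reach:
  assumes t: "t \<in> level T le i" and s: "s \<in> up le t"
  shows "((t,0),(s,0)) \<in> RR\<^sup>*"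
  using s
proof (induction s rule: wf_induct[OF ot_wf[OF ot]])
  case (1 s)
  have IH: "\<And>y. y \<in> sdown le s \<Longrightarrow> y \<in> up le t \<Longrightarrow> ((t,0),(y,0)) \<in> RR\<^sup>*"
    using 1 ot_le[OF ot] unfolding up_def by blast
  have ts: "(t,s)\<in>le" using 1(2) unfolding up_def by blast
  have sT: "s\<in>T" and tT: "t\<in>T" using ot_le[OF ot ts] by auto
  show ?case
  proof (cases "s = t")
    case True then show ?thesis by simp
  next
    case False
    then have tsd: "t \<in> sdown le s" using ts unfolding sdown_def by blast
    show ?thesis
    proof (cases "is_successor T le s")
      case True
      define p where "p = pred_of T le s"
      have p: "is_pred T le p s" unfolding p_def by (rule ot_pred_of[OF ot True])
      have ps: "(p,s)\<in>le" "p \<in> sdown le s" using p unfolding is_pred_def sdown_def by auto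
      have "(t,p)\<in>le \<or> (p,t)\<in>le" using ot_comp[OF ot sT ts ps(1)] .
      then have tp: "(t,p)\<in>le"
      proof
        assume "(p,t)\<in>le"
        then show "(t,p)\<in>le"
        proof (cases "p = t")
          case True then show ?thesis using ot_refl[OF ot tT] by simp
        next
          case False
          then have "p \<in> sdown le t" using \<open>(p,t)\<in>le\<close> unfolding sdown_def by blast
          then show ?thesis using p tT tsd unfolding is_pred_def by blast
        qed
      qed
      then have pu: "p \<in> up le t" unfolding up_def by blast
      have r1: "((t,0),(p,0)) \<in> RR\<^sup>*" using IH[OF ps(2) pu] .
      have "((s,0),(p,0)) \<in> ray_edges0 T le E" unfolding ray_edges0_def p_def using sT True by blast
      moreover have "(p,0) \<in> WW" "(s,0) \<in> WW" using up_WW[OF t] pu 1(2) by auto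
      ultimately have "((p,0),(s,0)) \<in> RR" unfolding RR_def EH_def by blast
      then show ?thesis using r1 by (rule rtrancl_into_rtrancl[rotated])
    next
      case ns: False
      have nr: "\<not> is_root T le s" using tT ts False unfolding is_root_def by blast
      have iso: "(Restr le (down_nbrs le E s), natLeq) \<in> ordIso" using sp sT ns nr unfolding sparse_def by blast
      obtain u where u: "u \<in> down_nbrs le E s" "(t,u)\<in>le"
        using sp sT tsd unfolding sparse_def T_graph_def by blast
      obtain n where n: "nth_dn le E s n = u" using nth_dn_props(2)[OF ot sT iso u(1)] by blast
      have usd: "u \<in> sdown le s" using u(1) unfolding down_nbrs_def by blast
      have uu: "u \<in> up le t" using u(2) unfolding up_def by blast
      have r1: "((t,0),(u,0)) \<in> RR\<^sup>*" using IH[OF usd uu] .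
      have r2: "((u,0),(u,n)) \<in> RR\<^sup>*" using row'[OF t uu] .
      have "((s,n),(u,n)) \<in> ray_edges0 T le E" unfolding ray_edges0_def using sT ns nr n by blast
      moreover have "(u,n) \<in> WW" "(s,n) \<in> WW" using up_WW[OF t] uu 1(2) by auto
      ultimately have e: "((u,n),(s,n)) \<in> RR" unfolding RR_def EH_def by blast
      have r3: "((s,n),(s,0)) \<in> RR\<^sup>*" using row'[OF t 1(2)] .
      show ?thesis using r1 r2 e r3 by (meson rtrancl_trans r_into_rtrancl)
    qed
  qed
qed

lemma comp_eq:
  assumes t: "t \<in> level T le i" and v: "v \<in> up le t \<times> UNIV"
  shows "{w \<in> WW. (v,w) \<in> RR\<^sup>*} = up le t \<times> UNIV"
proof
  show "{w \<in> WW. (v,w) \<in> RR\<^sup>*} \<subseteq> up le t \<times> UNIV" using RR_closed_rtrancl[OF t _ v] by blast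
  show "up le t \<times> UNIV \<subseteq> {w \<in> WW. (v,w) \<in> RR\<^sup>*}"
  proof
    fix w assume w: "w \<in> up le t \<times> (UNIV::nat set)"
    obtain s n where wsn: "w = (s,n)" "s \<in> up le t" using w by auto
    obtain s' n' where vsn: "v = (s',n')" "s' \<in> up le t" using v by auto
    have a: "((t,0),w) \<in> RR\<^sup>*" using reach[OF t wsn(2)] row'[OF t wsn(2)] wsn(1) by (meson rtrancl_trans)
    have b: "((t,0),v) \<in> RR\<^sup>*" using reach[OF t vsn(2)] row'[OF t vsn(2)] vsn(1) by (meson rtrancl_trans)
    have "(v,w) \<in> RR\<^sup>*" using RR_rtrancl_sym[OF b] a by (rule rtrancl_trans)
    then show "w \<in> {w \<in> WW. (v,w) \<in> RR\<^sup>*}" using up_WW[OF t] w by blast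
  qed
qed

lemma main:
  "bij_betw (\<lambda>t. induced (ray_inflation T le E) (up le t \<times> UNIV))
           (level T le i)
           (components (delete (ray_inflation T le E) (below_level T le i \<times> UNIV)))"
proof -
  have D: "delete (ray_inflation T le E) (below_level T le i \<times> UNIV) = (WW, RR)"
    unfolding delete_def induced_def ray_inflation_def WW_def RR_def EH_def by auto
  have RRW: "RR \<inter> (WW \<times> WW) = RR" unfolding RR_def by blast
  have fU: "induced (ray_inflation T le E) (up le t \<times> UNIV) = induced (WW,RR) (up le t \<times> UNIV)"
    if t: "t \<in> level T le i" for t
  proof -
    have U: "up le t \<times> UNIV \<subseteq> WW" by (rule up_WW[OF t])
    have UT: "up le t \<times> UNIV \<subseteq> T \<times> (UNIV::nat set)" using ot_le[OF ot] unfolding up_def by blast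
    show ?thesis unfolding induced_def ray_inflation_def fst_conv snd_conv
      using U UT unfolding RR_def EH_def by auto
  qed
  have tU: "(t,0) \<in> up le t \<times> (UNIV::nat set)" if "t \<in> level T le i" for t
    using that ot_refl[OF ot] unfolding level_def up_def by blast
  show ?thesis unfolding D bij_betw_def components_def fst_conv snd_conv RRW
  proof (intro conjI)
    show "inj_on (\<lambda>t. induced (ray_inflation T le E) (up le t \<times> UNIV)) (level T le i)"
    proof (rule inj_onI)
      fix t t' assume t: "t \<in> level T le i" and t': "t' \<in> level T le i"
        and eq: "induced (ray_inflation T le E) (up le t \<times> UNIV) = induced (ray_inflation T le E) (up le t' \<times> UNIV)"
      have "up le t \<times> (UNIV::nat set) = up le t' \<times> UNIV"
      proof -
        have fstU: "fst (induced (ray_inflation T le E) (up le x \<times> UNIV)) = up le x \<times> (UNIV::nat set)" for x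
          using ot_le[OF ot] unfolding induced_def ray_inflation_def up_def by auto
        show ?thesis using arg_cong[OF eq, of fst] unfolding fstU .
      qed
      then have "(t,0) \<in> up le t' \<times> (UNIV::nat set)" "(t',0) \<in> up le t \<times> (UNIV::nat set)" using tU t t' by auto
      then show "t = t'" using ot_antisym[OF ot] unfolding up_def by auto
    qed
    show "(\<lambda>t. induced (ray_inflation T le E) (up le t \<times> UNIV)) ` level T le i =
      {induced (WW, RR) C |C. \<exists>v\<in>WW. C = {w \<in> WW. (v, w) \<in> RR\<^sup>*}}"
    proof
      show "(\<lambda>t. induced (ray_inflation T le E) (up le t \<times> UNIV)) ` level T le i \<subseteq>
        {induced (WW, RR) C |C. \<exists>v\<in>WW. C = {w \<in> WW. (v, w) \<in> RR\<^sup>*}}"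
      proof
        fix x assume "x \<in> (\<lambda>t. induced (ray_inflation T le E) (up le t \<times> UNIV)) ` level T le i"
        then obtain t where t: "t \<in> level T le i" and x: "x = induced (ray_inflation T le E) (up le t \<times> UNIV)" by blast
        have "(t,0) \<in> WW" using tU[OF t] up_WW[OF t] by blast
        moreover have "up le t \<times> UNIV = {w \<in> WW. ((t,0), w) \<in> RR\<^sup>*}" using comp_eq[OF t tU[OF t]] by simp
        ultimately show "x \<in> {induced (WW, RR) C |C. \<exists>v\<in>WW. C = {w \<in> WW. (v, w) \<in> RR\<^sup>*}}"
          unfolding x fU[OF t] by blast
      qed
      show "{induced (WW, RR) C |C. \<exists>v\<in>WW. C = {w \<in> WW. (v, w) \<in> RR\<^sup>*}} \<subseteq>
        (\<lambda>t. induced (ray_inflation T le E) (up le t \<times> UNIV)) ` level T le i"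
      proof
        fix x assume "x \<in> {induced (WW, RR) C |C. \<exists>v\<in>WW. C = {w \<in> WW. (v, w) \<in> RR\<^sup>*}}"
        then obtain v where v: "v \<in> WW" and x: "x = induced (WW, RR) {w \<in> WW. (v, w) \<in> RR\<^sup>*}" by blast
        obtain s n where vsn: "v = (s,n)" by (cases v)
        then obtain t where t: "t \<in> level T le i" "(t,s)\<in>le" using v WW_char by blast
        have "v \<in> up le t \<times> UNIV" using t vsn unfolding up_def by blast
        then have "x = induced (ray_inflation T le E) (up le t \<times> UNIV)"
          unfolding x fU[OF t(1)] using comp_eq[OF t(1)] by simp
        then show "x \<in> (\<lambda>t. induced (ray_inflation T le E) (up le t \<times> UNIV)) ` level T le i"
          using t(1) by blast
      qed
    qed
  qed
qed

end

theorem lemma6p3: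
  fixes T :: "'a set" and le :: "'a rel" and E :: "'a rel" and i :: "'b rel"
  assumes "order_tree T le"
    and "height_le_omega1 T le"
    and "sparse T le E"
    and "Well_order i"
    and "(i, cardSuc natLeq) \<in> ordLess"
  shows "bij_betw (\<lambda>t. induced (ray_inflation T le E) (up le t \<times> UNIV))
           (level T le i)
           (components (delete (ray_inflation T le E) (below_level T le i \<times> UNIV)))"
  by (rule main[OF assms(1,3,4)])

end
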